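(* Let $\mathbf v\in\mathbb Z^4$ satisfy $Q_{\mathcal D}(\mathbf v)=-4$, and let $\mathcal C$ be the set of all integers occurring as a coordinate of some element of the orbit $\mathcal A[\mathbf v]$ (the curvatures of the corresponding integral spherical Apollonian packing). Then the set of residues modulo $12$ of elements of $\mathcal C$ omits exactly three congruence classes modulo $12$.
   Context: $Q_{\mathcal D}(a,b,c,d)=2(a^2+b^2+c^2+d^2)-(a+b+c+d)^2$. $\mathbf S_i$ ($i=1,\dots,4$) is the $4\times4$ integer matrix replacing the $i$-th coordinate $a_i$ of a column vector by $2\sum_{j\ne i}a_j-a_i$, other coordinates fixed; the Apollonian group $\mathcal A$ is the subgroup of $GL(4,\mathbb Z)$ they generate, and $\mathcal A[\mathbf v]=\{\mathbf U\mathbf v:\mathbf U\in\mathcal A\}$. *)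

theory Defs
  imports "HOL-Analysis.Analysis"
begin

definition Q_D :: "int ^ 4 \<Rightarrow> int" where
  "Q_D v = 2 * (\<Sum>i\<in>UNIV. (v $ i)^2) - (\<Sum>i\<in>UNIV. v $ i)^2"

definition apollo_S :: "4 \<Rightarrow> int ^ 4 ^ 4" where
  "apollo_S i = (\<chi> r c. if r = i then (if c = i then -1 else 2)
                         else (if r = c then 1 else 0))"

inductive_set apollonian_group :: "(int ^ 4 ^ 4) set" where
  gen: "apollo_S i \<in> apollonian_group"
| one: "mat 1 \<in> apollonian_group"
| mult: "U \<in> apollonian_group \<Longrightarrow> V \<in> apollonian_group \<Longrightarrow> U ** V \<in> apollonian_group"
| inv: "U \<in> apollonian_group \<Longrightarrow> U ** W = mat 1 \<Longrightarrow> W ** U = mat 1 \<Longrightarrow> W \<in> apollonian_group"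

definition apollonian_orbit :: "int ^ 4 \<Rightarrow> (int ^ 4) set" where
  "apollonian_orbit v = {U *v v | U. U \<in> apollonian_group}"

definition curvatures :: "int ^ 4 \<Rightarrow> int set" where
  "curvatures v = {w $ i | w i. w \<in> apollonian_orbit v}"

end

theory Submission
  imports Defs
begin

lemma S_apply: "(apollo_S i *v w) $ j = (if j = i then 2 * (\<Sum>k\<in>UNIV. w $ k) - 3 * w $ i else w $ j)"
  unfolding apollo_S_def matrix_vector_mult_def
  using exhaust_4[of i] exhaust_4[of j]
  by (elim disjE) (simp_all add: sum_4)

lemma S_sum: "(\<Sum>k\<in>UNIV. (apollo_S i *v w) $ k) = 3 * (\<Sum>k\<in>UNIV. w $ k) - 4 * w $ i"
  unfolding S_apply using exhaust_4[of i]
  by (elim disjE) (simp_all add: sum_4)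

lemma SS: "apollo_S i ** apollo_S i = mat 1"
  unfolding apollo_S_def matrix_matrix_mult_def mat_def
  using exhaust_4[of i]
  by (elim disjE) (simp_all add: vec_eq_iff forall_4 sum_4)

inductive_set amon :: "(int ^ 4 ^ 4) set" where
  gen: "apollo_S i \<in> amon"
| one: "mat 1 \<in> amon"
| mult: "U \<in> amon \<Longrightarrow> V \<in> amon \<Longrightarrow> U ** V \<in> amon"

lemma amon_linv: "U \<in> amon \<Longrightarrow> \<exists>U'\<in>amon. U' ** U = mat 1"
proof (induction rule: amon.induct)
  case (gen i)
  then show ?case using SS amon.gen by blast
next
  case one
  then show ?case using amon.one by (metis matrix_mul_lid)
next
  case (mult U V)
  then obtain U' V' where u: "U' \<in> amon" "U' ** U = mat 1" and v: "V' \<in> amon" "V' ** V = mat 1" by blast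
  have "(V' ** U') ** (U ** V) = V' ** ((U' ** U) ** V)" by (simp add: matrix_mul_assoc)
  also have "\<dots> = mat 1" using u v by (simp add: matrix_mul_lid)
  finally show ?case using u v amon.mult by blast
qed

lemma group_sub: "U \<in> apollonian_group \<Longrightarrow> U \<in> amon"
proof (induction rule: apollonian_group.induct)
  case (gen i) then show ?case by (rule amon.gen)
next
  case one then show ?case by (rule amon.one)
next
  case (mult U V) then show ?case by (simp add: amon.mult)
next
  case (inv U W)
  then obtain U' where u: "U' \<in> amon" "U' ** U = mat 1" using amon_linv by blast
  have "U' = U' ** (U ** W)" using inv by (simp add: matrix_mul_rid)
  also have "\<dots> = (U' ** U) ** W" by (simp add: matrix_mul_assoc)
  also have "\<dots> = W" using u by (simp add: matrix_mul_lid)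
  finally show ?case using u by simp
qed

lemma m4: "(4*m - 3*x) mod 4 = (x::int) mod 4"
proof -
  have "4*m - 3*x = x + 4*(m - x)" by algebra
  then show ?thesis by (simp only: mod_mult_self2)
qed

lemma m3: "(2*y - 3*x) mod 3 = (-y::int) mod 3"
proof -
  have "2*y - 3*x = -y + 3*(y - x)" by algebra
  then show ?thesis by (simp only: mod_mult_self2)
qed

lemma m38: "(6*y - 8*z - 3*x) mod 3 = (z::int) mod 3"
proof -
  have "6*y - 8*z - 3*x = z + 3*(2*y - 3*z - x)" by algebra
  then show ?thesis by (simp only: mod_mult_self2)
qed

lemma inv4: "U \<in> amon \<Longrightarrow> even (\<Sum>k\<in>UNIV. w $ k) \<Longrightarrow>
   even (\<Sum>k\<in>UNIV. (U *v w) $ k) \<and> (\<forall>j. (U *v w) $ j mod 4 = w $ j mod 4)"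
proof (induction U arbitrary: w rule: amon.induct)
  case (gen i)
  then obtain m where m: "(\<Sum>k\<in>UNIV. w $ k) = 2 * m" by blast
  have "even (\<Sum>k\<in>UNIV. (apollo_S i *v w) $ k)" unfolding S_sum m by simp
  moreover have "(apollo_S i *v w) $ j mod 4 = w $ j mod 4" for j
    unfolding S_apply m by (simp add: m4)
  ultimately show ?case by blast
next
  case one
  then show ?case by (simp add: matrix_vector_mul_lid)
next
  case (mult U V)
  then show ?case by (simp add: matrix_vector_mul_assoc[symmetric])
qed

lemma int4: "(a::int) \<in> {0..3} \<Longrightarrow> a = 0 \<or> a = 1 \<or> a = 2 \<or> a = 3" by auto
lemma int3: "(a::int) \<in> {0..2} \<Longrightarrow> a = 0 \<or> a = 1 \<or> a = 2" by auto

lemma fin3: 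
  fixes a b c d :: int
  assumes "a \<in> {0..2}" "b \<in> {0..2}" "c \<in> {0..2}" "d \<in> {0..2}"
   "3 dvd (2*(a^2+b^2+c^2+d^2) - (a+b+c+d)^2 + 4)"
  shows "{0,1,2} \<subseteq> {a,b,c,d,(-(a+b+c+d)) mod 3}"
  using int3[OF assms(1)] int3[OF assms(2)] int3[OF assms(3)] int3[OF assms(4)] assms(5)
  by (elim disjE) simp_all

lemma fin4: 
  fixes a b c d :: int
  assumes "a \<in> {0..3}" "b \<in> {0..3}" "c \<in> {0..3}" "d \<in> {0..3}" "even (a+b+c+d)"
   "16 dvd (2*(a^2+b^2+c^2+d^2) - (a+b+c+d)^2 + 4)"
  shows "\<exists>r\<in>{0..3}. r \<notin> {a,b,c,d} \<and> (\<forall>x\<in>{0..3}. x \<noteq> r \<longrightarrow> x \<in> {a,b,c,d})"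
proof -
  have "(0 \<notin> {a,b,c,d} \<and> {1,2,3} \<subseteq> {a,b,c,d}) \<or> (1 \<notin> {a,b,c,d} \<and> {0,2,3} \<subseteq> {a,b,c,d})
   \<or> (2 \<notin> {a,b,c,d} \<and> {0,1,3} \<subseteq> {a,b,c,d}) \<or> (3 \<notin> {a,b,c,d} \<and> {0,1,2} \<subseteq> {a,b,c,d})"
  using int4[OF assms(1)] int4[OF assms(2)] int4[OF assms(3)] int4[OF assms(4)] assms(5,6)
  by (elim disjE) simp_all
  then show ?thesis by (elim disjE) (rule bexI[where x=0] bexI[where x=1] bexI[where x=2] bexI[where x=3]; force)+
qed

lemma Qexp: "Q_D v = 2*((v$1)^2+(v$2)^2+(v$3)^2+(v$4)^2) - (v$1+v$2+v$3+v$4)^2"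
  unfolding Q_D_def sum_4 by simp

lemma Q_even: assumes "Q_D v = -4" shows "even (\<Sum>k\<in>UNIV. v $ k)"
proof -
  define a b c d where "a = v$1" "b = v$2" "c = v$3" "d = v$4"
  have q: "2*(a^2+b^2+c^2+d^2) - (a+b+c+d)^2 = -4" using assms Qexp a_b_c_d_def by simp
  have "even ((a+b+c+d)^2)"
  proof -
    have "(a+b+c+d)^2 = 2*(a^2+b^2+c^2+d^2) + 4" using q by simp
    then show ?thesis by simp
  qed
  then show ?thesis unfolding sum_4 a_b_c_d_def by simp
qed

lemma curv_mod4: assumes "Q_D v = -4" "x \<in> curvatures v" shows "\<exists>j. x mod 4 = v$j mod 4"
proof -
  obtain w i where "x = w $ i" "w \<in> apollonian_orbit v" using assms(2) unfolding curvatures_def by blast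
  then obtain U where "U \<in> apollonian_group" "x = (U *v v) $ i" unfolding apollonian_orbit_def by blast
  then show ?thesis using inv4[OF group_sub Q_even[OF assms(1)]] by blast
qed

lemma curv_ij: assumes "Q_D v = -4"
  shows "((apollo_S i ** apollo_S j) *v v) $ i \<in> curvatures v
    \<and> ((apollo_S i ** apollo_S j) *v v) $ i mod 4 = v$i mod 4
    \<and> ((apollo_S i ** apollo_S j) *v v) $ i mod 3 = v$j mod 3"
proof -
  have g: "apollo_S i ** apollo_S j \<in> apollonian_group"
    by (intro apollonian_group.mult apollonian_group.gen)
  have m: "(apollo_S i ** apollo_S j) \<in> amon" by (rule group_sub[OF g])
  have c: "((apollo_S i ** apollo_S j) *v v) $ i \<in> curvatures v"
    unfolding curvatures_def apollonian_orbit_def using g by blast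
  have "((apollo_S i ** apollo_S j) *v v) $ i mod 4 = v$i mod 4"
    using inv4[OF m Q_even[OF assms]] by blast
  moreover have "((apollo_S i ** apollo_S j) *v v) $ i mod 3 = v$j mod 3"
  proof -
    define s where "s = (\<Sum>k\<in>UNIV. v $ k)"
    have e: "((apollo_S i ** apollo_S j) *v v) $ i = 2 * (3 * s - 4 * v$j) - 3 * (if i = j then 2 * s - 3 * v$i else v$i)"
      unfolding matrix_vector_mul_assoc[symmetric] S_apply[of i _ i] S_sum s_def
      by (simp add: S_apply)
    show ?thesis
    proof (cases "i = j")
      case True
      have "2 * (3 * s - 4 * v$j) - 3 * (2 * s - 3 * v$j) = v$j" by (simp add: algebra_simps)
      then show ?thesis unfolding e using True by simp
    next
      case False
      then show ?thesis unfolding e using False by (simp add: m38)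
    qed
  qed
  ultimately show ?thesis using c by blast
qed

lemma curv_Si: assumes "Q_D v = -4"
  shows "(apollo_S i *v v) $ i \<in> curvatures v
    \<and> (apollo_S i *v v) $ i mod 4 = v$i mod 4
    \<and> (apollo_S i *v v) $ i mod 3 = (- (\<Sum>k\<in>UNIV. v $ k)) mod 3"
proof -
  have g: "apollo_S i \<in> apollonian_group" by (rule apollonian_group.gen)
  have c: "(apollo_S i *v v) $ i \<in> curvatures v"
    unfolding curvatures_def apollonian_orbit_def using g by blast
  have "(apollo_S i *v v) $ i mod 4 = v$i mod 4"
    using inv4[OF amon.gen Q_even[OF assms]] by blast
  moreover have "(apollo_S i *v v) $ i mod 3 = (- (\<Sum>k\<in>UNIV. v $ k)) mod 3"
    unfolding S_apply by (simp add: m3)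
  ultimately show ?thesis using c by blast
qed

lemma Q_mod3: assumes "Q_D v = -4"
  shows "{0,1,2} \<subseteq> {v$1 mod 3, v$2 mod 3, v$3 mod 3, v$4 mod 3, (-(\<Sum>k\<in>UNIV. v $ k)) mod 3}"
proof -
  define a b c d where "a = v$1" "b = v$2" "c = v$3" "d = v$4"
  have q: "2*(a^2+b^2+c^2+d^2) - (a+b+c+d)^2 = -4" using assms Qexp a_b_c_d_def by simp
  define ra rb rc rd where "ra = a mod 3" "rb = b mod 3" "rc = c mod 3" "rd = d mod 3"
  define qa qb qc qd where "qa = a div 3" "qb = b div 3" "qc = c div 3" "qd = d div 3"
  have ex: "a = 3*qa+ra" "b = 3*qb+rb" "c = 3*qc+rc" "d = 3*qd+rd"
    unfolding ra_rb_rc_rd_def qa_qb_qc_qd_def by simp_all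
  define SQ RR where "SQ = qa+qb+qc+qd" "RR = ra+rb+rc+rd"
  define Qr where "Qr = 2*(ra^2+rb^2+rc^2+rd^2) - (ra+rb+rc+rd)^2"
  define X where "X = 6*(qa^2+qb^2+qc^2+qd^2) + 4*(qa*ra+qb*rb+qc*rc+qd*rd) - 3*SQ^2 - 2*SQ*RR"
  have E: "2*(a^2+b^2+c^2+d^2) - (a+b+c+d)^2 = Qr + 3*X"
    unfolding ex SQ_RR_def Qr_def X_def by algebra
  have "Qr + 4 = 3 * (-X)" using E q by linarith
  then have d3: "3 dvd (Qr + 4)" by (metis dvd_triv_left)
  have s: "a+b+c+d = 3*SQ + RR" unfolding SQ_RR_def ex by simp
  have "(-(a+b+c+d)) mod 3 = (-RR) mod 3" unfolding s
    by (metis add.commute minus_add_distrib mod_mult_self4 mult.commute mult_minus_right)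
  moreover have "ra \<in> {0..2}" "rb \<in> {0..2}" "rc \<in> {0..2}" "rd \<in> {0..2}"
    unfolding ra_rb_rc_rd_def by auto
  ultimately have F: "{0,1,2} \<subseteq> {ra,rb,rc,rd,(-RR) mod 3}"
    using fin3[of ra rb rc rd] d3 unfolding Qr_def SQ_RR_def(2) by blast
  have G: "(-(\<Sum>k\<in>UNIV. v$k)) mod 3 = (-RR) mod 3"
    using \<open>(-(a+b+c+d)) mod 3 = (-RR) mod 3\<close> unfolding sum_4 a_b_c_d_def .
  show ?thesis using F unfolding G ra_rb_rc_rd_def a_b_c_d_def .
qed

lemma Q_mod4: assumes "Q_D v = -4"
  shows "\<exists>r\<in>{0..3}. r \<notin> {v$1 mod 4, v$2 mod 4, v$3 mod 4, v$4 mod 4} \<and>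
     (\<forall>x\<in>{0..3}. x \<noteq> r \<longrightarrow> x \<in> {v$1 mod 4, v$2 mod 4, v$3 mod 4, v$4 mod 4})"
proof -
  define a b c d where "a = v$1" "b = v$2" "c = v$3" "d = v$4"
  have q: "2*(a^2+b^2+c^2+d^2) - (a+b+c+d)^2 = -4" using assms Qexp a_b_c_d_def by simp
  have ev: "even (a+b+c+d)" using Q_even[OF assms] unfolding sum_4 a_b_c_d_def .
  define ra rb rc rd where "ra = a mod 4" "rb = b mod 4" "rc = c mod 4" "rd = d mod 4"
  define qa qb qc qd where "qa = a div 4" "qb = b div 4" "qc = c div 4" "qd = d div 4"
  have ex: "a = 4*qa+ra" "b = 4*qb+rb" "c = 4*qc+rc" "d = 4*qd+rd"
    unfolding ra_rb_rc_rd_def qa_qb_qc_qd_def by simp_all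
  define SQ RR where "SQ = qa+qb+qc+qd" "RR = ra+rb+rc+rd"
  have s: "a+b+c+d = 4*SQ + RR" unfolding SQ_RR_def ex by simp
  have evR: "even RR" using ev unfolding s by simp
  then obtain k where k: "RR = 2*k" by blast
  define Qr where "Qr = 2*(ra^2+rb^2+rc^2+rd^2) - (ra+rb+rc+rd)^2"
  define X where "X = 2*(qa^2+qb^2+qc^2+qd^2) + (qa*ra+qb*rb+qc*rc+qd*rd) - SQ^2"
  have E: "2*(a^2+b^2+c^2+d^2) - (a+b+c+d)^2 = Qr + 16*X - 8*SQ*RR"
    unfolding ex SQ_RR_def Qr_def X_def by algebra
  have e8: "8*SQ*RR = 16*(SQ*k)" unfolding k by simp
  have "Qr + 4 = 16*(SQ*k) - 16*X" using E q e8 by linarith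
  then have "Qr + 4 = 16 * (SQ*k - X)" by (simp add: right_diff_distrib)
  then have d16: "16 dvd (Qr + 4)" by (metis dvd_triv_left)
  moreover have "ra \<in> {0..3}" "rb \<in> {0..3}" "rc \<in> {0..3}" "rd \<in> {0..3}"
    unfolding ra_rb_rc_rd_def by auto
  moreover have "even (ra+rb+rc+rd)" using evR unfolding SQ_RR_def .
  ultimately have F: "\<exists>r\<in>{0..3}. r \<notin> {ra,rb,rc,rd} \<and> (\<forall>x\<in>{0..3}. x \<noteq> r \<longrightarrow> x \<in> {ra,rb,rc,rd})"
    using fin4[of ra rb rc rd] unfolding Qr_def by blast
  show ?thesis using F unfolding ra_rb_rc_rd_def a_b_c_d_def .
qed

lemma crt12_aux: fixes m x :: int assumes "0 \<le> m" "m < 12" "0 \<le> x" "x < 12" "m mod 4 = x mod 4" "m mod 3 = x mod 3"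
  shows "m = x"
proof -
  have "4 dvd (m - x)" using assms(5) mod_eq_dvd_iff by blast
  then obtain k where k: "m - x = 4*k" by blast
  have "3 dvd (m - x)" using assms(6) mod_eq_dvd_iff by blast
  then have d: "3 dvd (4*k)" using k by simp
  have "-3 < k" "k < 3" using k assms(1-4) by linarith+
  then have "k = -2 \<or> k = -1 \<or> k = 0 \<or> k = 1 \<or> k = 2" by linarith
  then have "k = 0" using d by auto
  then show ?thesis using k by simp
qed

lemma crt12: "(c::int) mod 4 = x mod 4 \<Longrightarrow> c mod 3 = x mod 3 \<Longrightarrow> 0 \<le> x \<Longrightarrow> x < 12 \<Longrightarrow> c mod 12 = x"
  apply (rule crt12_aux)
  apply (simp_all add: mod_mod_cancel)
  done

lemma three12: "(x::int) mod 4 = r \<Longrightarrow> 0 \<le> x \<Longrightarrow> x < 12 \<Longrightarrow> x = r \<or> x = r + 4 \<or> x = r+8"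
proof -
  assume a: "x mod 4 = r" "0 \<le> x" "x < 12"
  have e: "x = 4 * (x div 4) + r" using a(1) div_mult_mod_eq[of x 4] by simp
  have "0 \<le> x div 4" "x div 4 < 3" using a(2,3) by simp_all
  then have "x div 4 = 0 \<or> x div 4 = 1 \<or> x div 4 = 2" by linarith
  then show ?thesis using e by auto
qed

lemma mod3_cases: "(x::int) mod 3 = 0 \<or> x mod 3 = 1 \<or> x mod 3 = 2"
proof -
  have "0 \<le> x mod 3" "x mod 3 < 3" by simp_all
  then show ?thesis by linarith
qed
lemma mod12_4: "(c mod 12) mod 4 = (c::int) mod 4"
  by (simp add: mod_mod_cancel)

theorem theorem5p1:
  fixes v :: "int ^ 4"
  assumes "Q_D v = -4"
  shows "card ({0..<12::int} - (\<lambda>c. c mod 12) ` curvatures v) = 3"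
proof -
  define V where "V = {v$1 mod 4, v$2 mod 4, v$3 mod 4, v$4 mod 4}"
  have Vj: "v$j mod 4 \<in> V" for j using exhaust_4[of j] unfolding V_def by auto
  have V3: "\<And>y. y \<in> V \<Longrightarrow> \<exists>j. y = v$j mod 4" unfolding V_def by auto
  obtain r where r: "r \<in> {0..3}" "r \<notin> V" "\<And>x. x\<in>{0..3} \<Longrightarrow> x \<noteq> r \<Longrightarrow> x \<in> V"
    using Q_mod4[OF assms] unfolding V_def by blast
  have img: "(\<lambda>c. c mod 12) ` curvatures v = {x\<in>{0..<12}. x mod 4 \<in> V}"
  proof (intro equalityI subsetI)
    fix x assume "x \<in> (\<lambda>c. c mod 12) ` curvatures v"
    then obtain c where c: "c \<in> curvatures v" "x = c mod 12" by blast
    obtain j where j: "c mod 4 = v$j mod 4" using curv_mod4[OF assms c(1)] by blast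
    have "x mod 4 = v$j mod 4" unfolding c(2) mod12_4 j ..
    then have "x mod 4 \<in> V" using Vj[of j] by (simp only:)
    moreover have "x \<in> {0..<12}" unfolding c(2) by simp
    ultimately show "x \<in> {x\<in>{0..<12}. x mod 4 \<in> V}" by blast
  next
    fix x assume x: "x \<in> {x\<in>{0..<12}. x mod 4 \<in> V}"
    then obtain i where i: "x mod 4 = v$i mod 4" using V3 by blast
    have "\<exists>c\<in>curvatures v. c mod 4 = v$i mod 4 \<and> c mod 3 = x mod 3"
    proof -
      have "x mod 3 \<in> {0,1,2}" using mod3_cases[of x] by blast
      then have "x mod 3 \<in> {v$1 mod 3, v$2 mod 3, v$3 mod 3, v$4 mod 3, (-(\<Sum>k\<in>UNIV. v $ k)) mod 3}"
        by (rule subsetD[OF Q_mod3[OF assms]])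
      then have "x mod 3 = v$1 mod 3 \<or> x mod 3 = v$2 mod 3 \<or> x mod 3 = v$3 mod 3 \<or> x mod 3 = v$4 mod 3
          \<or> x mod 3 = (-(\<Sum>k\<in>UNIV. v $ k)) mod 3" by (simp only: insert_iff empty_iff simp_thms)
      then show ?thesis
      proof (elim disjE)
        assume j: "x mod 3 = v$1 mod 3"
        show ?thesis using curv_ij[OF assms, of i 1] unfolding j[symmetric] by blast
      next
        assume j: "x mod 3 = v$2 mod 3"
        show ?thesis using curv_ij[OF assms, of i 2] unfolding j[symmetric] by blast
      next
        assume j: "x mod 3 = v$3 mod 3"
        show ?thesis using curv_ij[OF assms, of i 3] unfolding j[symmetric] by blast
      next
        assume j: "x mod 3 = v$4 mod 3"
        show ?thesis using curv_ij[OF assms, of i 4] unfolding j[symmetric] by blast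
      next
        assume e: "x mod 3 = (-(\<Sum>k\<in>UNIV. v $ k)) mod 3"
        show ?thesis using curv_Si[OF assms, of i] unfolding e[symmetric] by blast
      qed
    qed
    then obtain c where c0: "c \<in> curvatures v" "c mod 4 = v$i mod 4" "c mod 3 = x mod 3" by blast
    have c2: "c mod 4 = x mod 4" using c0(2) i by simp
    have xb: "0 \<le> x" "x < 12" using x by auto
    have "c mod 12 = x" using crt12[OF c2 c0(3) xb] .
    then show "x \<in> (\<lambda>c. c mod 12) ` curvatures v" using c0(1) by (rule image_eqI[where x=c, OF sym])
  qed
  have "{0..<12::int} - (\<lambda>c. c mod 12) ` curvatures v = {r, r+4, r+8}"
  proof (intro equalityI subsetI)
    fix x assume "x \<in> {0..<12::int} - (\<lambda>c. c mod 12) ` curvatures v"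
    then have x: "x \<in> {0..<12}" "x mod 4 \<notin> V" unfolding img by auto
    have "x mod 4 \<in> {0..3}" by simp
    then have "x mod 4 = r" using r(3)[of "x mod 4"] x(2) by blast
    then show "x \<in> {r, r+4, r+8}" using three12[of x r] x(1) by simp
  next
    fix x assume xr: "x \<in> {r, r+4, r+8}"
    have rb: "0 \<le> r" "r < 4" using r(1) by auto
    have m1: "r mod 4 = r" "(r+4) mod 4 = r" using rb by simp_all
    have m8: "(r+8) mod 4 = r" using m1(1) mod_mult_self2[of r 4 2] by simp
    note m = m1 m8
    have "x = r \<or> x = r+4 \<or> x = r+8" using xr by simp
    then have "x \<in> {0..<12} \<and> x mod 4 = r"
    proof (elim disjE)
      assume "x = r" then show ?thesis using rb m by simp
    next
      assume "x = r + 4" then show ?thesis using rb m by simp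
    next
      assume "x = r + 8" then show ?thesis using rb m by simp
    qed
    then show "x \<in> {0..<12::int} - (\<lambda>c. c mod 12) ` curvatures v" unfolding img using r(2) by auto
  qed
  then show ?thesis by simp
qed

end
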